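(* The principle $(\star_s)$ implies that every Aronszajn tree is $(\mathcal{NS}^+,\mathcal{NS}^* )$-special.
   Context: $[\theta]^{\le\aleph_0}$: countable subsets of $\theta$; $x\subseteq^*y$ iff $x\setminus y$ finite; $\downarrow\mathcal H=\bigcup_{x\in\mathcal H}\mathcal P(x)$; a set is locally in $\mathcal K$ if all its countable subsets are in $\mathcal K$; $B$ is orthogonal to $\mathcal H$ if $B\cap x$ is finite for all $x\in\mathcal H$; $\sigma$-directed means every countable subset has an upper bound in the family. $(\star_s)$: for every ordinal $\theta$ of uncountable cofinality there is a maximal antichain $\mathcal A$ of the partial order (stationary subsets of $\theta$, $\subseteq$) such that for every $\sigma$-directed subfamily $\mathcal H$ of $([\theta]^{\le\aleph_0},\subseteq^* )$, either (1) every $S\in\mathcal A$ has an uncountable $C\subseteq S$, relatively closed in $S$, locally in $\downarrow\mathcal H$, or (2) there is a stationary subset of $\theta$ orthogonal to $\mathcal H$. For a tree $T$ of height $\omega_1$ with $\alpha$-th level $T_\alpha$ and $C\subseteq\omega_1$, $T\restriction C=\bigcup_{\alpha\in C}T_\alpha$. A tree is special if it is a countable union of antichains. An $\omega_1$-tree $T$ is $(\mathcal{NS}^+,\mathcal{NS}^* )$-special if there is a maximal antichain $\mathcal A$ of (stationary subsets of $\omega_1$, $\subseteq$) such that every $S\in\mathcal A$ has a relatively closed $C\subseteq S$ for which $T\restriction C$ is special. An Aronszajn tree is an $\omega_1$-tree (height $\omega_1$, countable levels) with no uncountable branch. *)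

theory Defs
  imports Main "HOL-Library.Countable_Set"
begin

text \<open>An ordinal theta is represented by a well-order r (non-strict, as a set of pairs);
  the elements of theta (the ordinals below theta) are the elements of Field r.\<close>

definition least_upper_bound :: "'x rel \<Rightarrow> 'x set \<Rightarrow> 'x \<Rightarrow> bool" where
  "least_upper_bound r X a \<longleftrightarrow> a \<in> Field r \<and> (\<forall>x\<in>X. (x, a) \<in> r) \<and>
     (\<forall>b\<in>Field r. (\<forall>x\<in>X. (x, b) \<in> r) \<longrightarrow> (a, b) \<in> r)"

definition uncountable_cof :: "'x rel \<Rightarrow> bool" where
  "uncountable_cof r \<longleftrightarrow>
     (\<forall>X. X \<subseteq> Field r \<and> countable X \<longrightarrow> (\<exists>b\<in>Field r. \<forall>x\<in>X. (x, b) \<in> r \<and> x \<noteq> b))"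

definition unbounded :: "'x rel \<Rightarrow> 'x set \<Rightarrow> bool" where
  "unbounded r C \<longleftrightarrow> (\<forall>a\<in>Field r. \<exists>b\<in>C. (a, b) \<in> r)"

definition rel_closed :: "'x rel \<Rightarrow> 'x set \<Rightarrow> 'x set \<Rightarrow> bool" where
  "rel_closed r S C \<longleftrightarrow> C \<subseteq> S \<and>
     (\<forall>X a. X \<subseteq> C \<and> X \<noteq> {} \<and> a \<in> S \<and> least_upper_bound r X a \<longrightarrow> a \<in> C)"

definition club :: "'x rel \<Rightarrow> 'x set \<Rightarrow> bool" where
  "club r C \<longleftrightarrow> rel_closed r (Field r) C \<and> unbounded r C"

definition stationary :: "'x rel \<Rightarrow> 'x set \<Rightarrow> bool" where
  "stationary r S \<longleftrightarrow> S \<subseteq> Field r \<and> (\<forall>C. club r C \<longrightarrow> S \<inter> C \<noteq> {})"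

text \<open>Maximal antichain in the partial order (stationary subsets, subset): members are
  stationary, distinct members are incompatible (no stationary common lower bound,
  i.e. their intersection is nonstationary), and every stationary set is compatible
  with some member.\<close>
definition max_antichain_stat :: "'x rel \<Rightarrow> 'x set set \<Rightarrow> bool" where
  "max_antichain_stat r \<A> \<longleftrightarrow>
     (\<forall>S\<in>\<A>. stationary r S) \<and>
     (\<forall>S\<in>\<A>. \<forall>S'\<in>\<A>. S \<noteq> S' \<longrightarrow> \<not> stationary r (S \<inter> S')) \<and>
     (\<forall>B. stationary r B \<longrightarrow> (\<exists>S\<in>\<A>. stationary r (S \<inter> B)))"

definition almost_subset :: "'x set \<Rightarrow> 'x set \<Rightarrow> bool" where
  "almost_subset x y \<longleftrightarrow> finite (x - y)"

definition sigma_directed :: "'x rel \<Rightarrow> 'x set set \<Rightarrow> bool" where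
  "sigma_directed r \<H> \<longleftrightarrow>
     (\<forall>x\<in>\<H>. x \<subseteq> Field r \<and> countable x) \<and>
     (\<forall>\<G>. \<G> \<subseteq> \<H> \<and> countable \<G> \<longrightarrow> (\<exists>y\<in>\<H>. \<forall>x\<in>\<G>. almost_subset x y))"

definition down :: "'x set set \<Rightarrow> 'x set set" where
  "down \<H> = (\<Union>x\<in>\<H>. Pow x)"

definition locally_in :: "'x set set \<Rightarrow> 'x set \<Rightarrow> bool" where
  "locally_in \<K> C \<longleftrightarrow> (\<forall>Y. Y \<subseteq> C \<and> countable Y \<longrightarrow> Y \<in> \<K>)"

definition orthogonal :: "'x set \<Rightarrow> 'x set set \<Rightarrow> bool" where
  "orthogonal B \<H> \<longleftrightarrow> (\<forall>x\<in>\<H>. finite (B \<inter> x))"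

text \<open>(star_s) restricted to ordinals represented by well-orders on the type 'x.\<close>
definition star_s :: "'x itself \<Rightarrow> bool" where
  "star_s (_ :: 'x itself) \<longleftrightarrow>
     (\<forall>r :: 'x rel. Well_order r \<and> uncountable_cof r \<longrightarrow>
       (\<exists>\<A>. max_antichain_stat r \<A> \<and>
          (\<forall>\<H>. sigma_directed r \<H> \<longrightarrow>
             (\<forall>S\<in>\<A>. \<exists>C. C \<subseteq> S \<and> uncountable C \<and> rel_closed r S C \<and> locally_in (down \<H>) C)
             \<or> (\<exists>B. stationary r B \<and> orthogonal B \<H>))))"

text \<open>w is (a copy of) omega_1: an uncountable well-order all of whose proper initial
  segments are countable.\<close>
definition is_omega1 :: "'i rel \<Rightarrow> bool" where
  "is_omega1 w \<longleftrightarrow> Well_order w \<and> uncountable (Field w) \<and>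
     (\<forall>\<alpha>\<in>Field w. countable (underS w \<alpha>))"

definition is_tree :: "'a set \<Rightarrow> ('a \<Rightarrow> 'a \<Rightarrow> bool) \<Rightarrow> bool" where
  "is_tree T lt \<longleftrightarrow>
     (\<forall>x\<in>T. \<not> lt x x) \<and>
     (\<forall>x\<in>T. \<forall>y\<in>T. \<forall>z\<in>T. lt x y \<and> lt y z \<longrightarrow> lt x z) \<and>
     (\<forall>t\<in>T. (\<forall>x\<in>T. \<forall>y\<in>T. lt x t \<and> lt y t \<longrightarrow> lt x y \<or> x = y \<or> lt y x) \<and>
             (\<forall>X. X \<subseteq> {s\<in>T. lt s t} \<and> X \<noteq> {} \<longrightarrow> (\<exists>m\<in>X. \<forall>x\<in>X. \<not> lt x m)))"

definition level :: "'i rel \<Rightarrow> 'a set \<Rightarrow> ('a \<Rightarrow> 'a \<Rightarrow> bool) \<Rightarrow> 'i \<Rightarrow> 'a set" where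
  "level w T lt \<alpha> = {t\<in>T. \<exists>f. bij_betw f {s\<in>T. lt s t} (underS w \<alpha>) \<and>
      (\<forall>x\<in>{s\<in>T. lt s t}. \<forall>y\<in>{s\<in>T. lt s t}. lt x y \<longleftrightarrow> (f x, f y) \<in> w \<and> f x \<noteq> f y)}"

definition omega1_tree :: "'i rel \<Rightarrow> 'a set \<Rightarrow> ('a \<Rightarrow> 'a \<Rightarrow> bool) \<Rightarrow> bool" where
  "omega1_tree w T lt \<longleftrightarrow> is_tree T lt \<and> T = (\<Union>\<alpha>\<in>Field w. level w T lt \<alpha>) \<and>
     (\<forall>\<alpha>\<in>Field w. level w T lt \<alpha> \<noteq> {} \<and> countable (level w T lt \<alpha>))"

definition branch :: "'a set \<Rightarrow> ('a \<Rightarrow> 'a \<Rightarrow> bool) \<Rightarrow> 'a set \<Rightarrow> bool" where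
  "branch T lt B \<longleftrightarrow> B \<subseteq> T \<and> (\<forall>x\<in>B. \<forall>y\<in>B. lt x y \<or> x = y \<or> lt y x) \<and>
     (\<forall>x\<in>B. \<forall>s\<in>T. lt s x \<longrightarrow> s \<in> B)"

definition aronszajn :: "'i rel \<Rightarrow> 'a set \<Rightarrow> ('a \<Rightarrow> 'a \<Rightarrow> bool) \<Rightarrow> bool" where
  "aronszajn w T lt \<longleftrightarrow> omega1_tree w T lt \<and> (\<forall>B. branch T lt B \<longrightarrow> countable B)"

definition restr :: "'i rel \<Rightarrow> 'a set \<Rightarrow> ('a \<Rightarrow> 'a \<Rightarrow> bool) \<Rightarrow> 'i set \<Rightarrow> 'a set" where
  "restr w T lt C = (\<Union>\<alpha>\<in>C. level w T lt \<alpha>)"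

definition antichain :: "('a \<Rightarrow> 'a \<Rightarrow> bool) \<Rightarrow> 'a set \<Rightarrow> bool" where
  "antichain lt A \<longleftrightarrow> (\<forall>x\<in>A. \<forall>y\<in>A. x \<noteq> y \<longrightarrow> \<not> lt x y \<and> \<not> lt y x)"

definition special :: "('a \<Rightarrow> 'a \<Rightarrow> bool) \<Rightarrow> 'a set \<Rightarrow> bool" where
  "special lt X \<longleftrightarrow> (\<exists>\<F>. countable \<F> \<and> (\<forall>A\<in>\<F>. antichain lt A) \<and> X = \<Union>\<F>)"

text \<open>(NS+, NS*)-special; the relatively closed sets C are required to be uncountable
  (i.e. unbounded in omega_1).\<close>
definition NS_special :: "'i rel \<Rightarrow> 'a set \<Rightarrow> ('a \<Rightarrow> 'a \<Rightarrow> bool) \<Rightarrow> bool" where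
  "NS_special w T lt \<longleftrightarrow> (\<exists>\<A>. max_antichain_stat w \<A> \<and>
     (\<forall>S\<in>\<A>. \<exists>C. C \<subseteq> S \<and> uncountable C \<and> rel_closed w S C \<and> special lt (restr w T lt C)))"

end

theory Submission
  imports Defs
begin


locale om1 =
  fixes w :: "'i rel"
  assumes om: "is_omega1 w"
begin

abbreviation lw where "lw a b \<equiv> (a,b) \<in> w \<and> a \<noteq> b"

lemma wo: "Well_order w" using om by (simp add: is_omega1_def)
lemma unc: "uncountable (Field w)" using om by (simp add: is_omega1_def)
lemma cseg: "\<alpha> \<in> Field w \<Longrightarrow> countable (underS w \<alpha>)" using om by (simp add: is_omega1_def)

lemma trans_w: "trans w" using wo by (simp add: order_on_defs)
lemma antisym_w: "antisym w" using wo by (simp add: order_on_defs)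
lemma total_w: "total_on (Field w) w" using wo by (simp add: order_on_defs)
lemma refl_w: "refl_on (Field w) w" using wo by (simp add: order_on_defs)
lemma wf_w: "wf (w - Id)" using wo by (simp add: well_order_on_def)

lemma tr: "(a,b) \<in> w \<Longrightarrow> (b,c) \<in> w \<Longrightarrow> (a,c) \<in> w"
  using trans_w by (meson transD)
lemma asym: "(a,b) \<in> w \<Longrightarrow> (b,a) \<in> w \<Longrightarrow> a = b"
  using antisym_w by (meson antisymD)
lemma tot: "a \<in> Field w \<Longrightarrow> b \<in> Field w \<Longrightarrow> (a,b) \<in> w \<or> (b,a) \<in> w"
  using total_w refl_w by (metis refl_onD total_on_def)
lemma fld1: "(a,b) \<in> w \<Longrightarrow> a \<in> Field w" by (simp add: FieldI1)
lemma fld2: "(a,b) \<in> w \<Longrightarrow> b \<in> Field w" by (simp add: FieldI2)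
lemma rfl: "a \<in> Field w \<Longrightarrow> (a,a) \<in> w" using refl_w by (simp add: refl_onD)

lemma lw_trans1: "lw a b \<Longrightarrow> (b,c) \<in> w \<Longrightarrow> lw a c" by (metis asym tr)
lemma lw_trans2: "(a,b) \<in> w \<Longrightarrow> lw b c \<Longrightarrow> lw a c" by (metis asym tr)
lemma not_lw: "a \<in> Field w \<Longrightarrow> b \<in> Field w \<Longrightarrow> \<not> lw a b \<Longrightarrow> (b,a) \<in> w"
  using tot by blast

lemma bounded:
  assumes "X \<subseteq> Field w" "countable X"
  shows "\<exists>b\<in>Field w. \<forall>x\<in>X. lw x b"
proof -
  have "countable (X \<union> (\<Union>x\<in>X. underS w x))" using assms cseg by auto
  then have "\<not> Field w \<subseteq> X \<union> (\<Union>x\<in>X. underS w x)" using unc countable_subset by blast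
  then obtain b where b: "b \<in> Field w" "b \<notin> X \<union> (\<Union>x\<in>X. underS w x)" by blast
  have "\<forall>x\<in>X. lw x b"
  proof
    fix x assume x: "x \<in> X"
    then have "b \<notin> underS w x" "b \<noteq> x" using b by auto
    then show "lw x b" using tot[of x b] x assms b by (auto simp: underS_def)
  qed
  then show ?thesis using b by blast
qed

lemma ucof: "uncountable_cof w"
  unfolding uncountable_cof_def using bounded by blast

lemma exists_above:
  assumes "uncountable U" "U \<subseteq> Field w" "\<beta> \<in> Field w"
  shows "\<exists>\<alpha>\<in>U. lw \<beta> \<alpha>"
proof -
  have "countable (underS w \<beta> \<union> {\<beta>})" using cseg assms by auto
  then have "\<not> U \<subseteq> underS w \<beta> \<union> {\<beta>}" using assms(1) countable_subset by blast
  then obtain \<alpha> where "\<alpha> \<in> U" "\<alpha> \<notin> underS w \<beta> \<union> {\<beta>}" by blast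
  moreover have "\<alpha> \<in> Field w" using \<open>\<alpha> \<in> U\<close> assms by blast
  ultimately have "lw \<beta> \<alpha>" using tot[of \<alpha> \<beta>] assms by (auto simp: underS_def)
  then show ?thesis using \<open>\<alpha> \<in> U\<close> by blast
qed

lemma uncountable_above:
  assumes "uncountable U" "U \<subseteq> Field w" "\<beta> \<in> Field w"
  shows "uncountable {\<alpha>\<in>U. lw \<beta> \<alpha>}"
proof
  assume c: "countable {\<alpha>\<in>U. lw \<beta> \<alpha>}"
  have "U \<subseteq> {\<alpha>\<in>U. lw \<beta> \<alpha>} \<union> underS w \<beta> \<union> {\<beta>}"
    using tot[of _ \<beta>] assms by (auto simp: underS_def)
  moreover have "countable ({\<alpha>\<in>U. lw \<beta> \<alpha>} \<union> underS w \<beta> \<union> {\<beta>})" using c cseg[OF assms(3)] by simp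
  ultimately show False using assms(1) countable_subset by blast
qed

lemma unbounded_uncountable:
  assumes "U \<subseteq> Field w" "\<forall>\<beta>\<in>Field w. \<exists>\<alpha>\<in>U. lw \<beta> \<alpha>"
  shows "uncountable U"
proof
  assume "countable U"
  then obtain b where b: "b \<in> Field w" "\<forall>x\<in>U. lw x b" using bounded assms by blast
  from assms(2) b(1) obtain \<alpha> where al: "\<alpha> \<in> U" "lw b \<alpha>" by blast
  then have "lw \<alpha> b" using b(2) by blast
  then show False using asym al(2) by blast
qed

lemma lub_exists:
  assumes "X \<subseteq> Field w" "countable X"
  shows "\<exists>a. least_upper_bound w X a"
proof -
  let ?U = "{b\<in>Field w. \<forall>x\<in>X. (x,b) \<in> w}"
  obtain b where "b \<in> Field w" "\<forall>x\<in>X. lw x b" using bounded assms by blast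
  then have "b \<in> ?U" by auto
  then obtain m where m1: "m \<in> ?U" and m2: "\<And>y. (y, m) \<in> w - Id \<Longrightarrow> y \<notin> ?U"
    by (rule wfE_min[OF wf_w]) blast+
  have m: "m \<in> ?U" "\<forall>u\<in>?U. (u,m) \<notin> w - Id" using m1 m2 by auto
  have "\<forall>u\<in>?U. (m,u) \<in> w"
  proof
    fix u assume u: "u \<in> ?U"
    then have "(u,m) \<notin> w - Id" using m by blast
    moreover have "u \<in> Field w" "m \<in> Field w" using u m by auto
    ultimately show "(m,u) \<in> w" using tot[of m u] rfl by auto
  qed
  then show ?thesis using m unfolding least_upper_bound_def by blast
qed

lemma stat_above:
  assumes "stationary w S" "\<beta> \<in> Field w"
  shows "\<exists>\<alpha>\<in>S. lw \<beta> \<alpha>"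
proof -
  let ?C = "{a\<in>Field w. lw \<beta> a}"
  have "club w ?C"
    unfolding club_def rel_closed_def unbounded_def
  proof (intro conjI allI impI ballI)
    fix X a assume h: "X \<subseteq> ?C \<and> X \<noteq> {} \<and> a \<in> Field w \<and> least_upper_bound w X a"
    then obtain x where "x \<in> X" by blast
    then show "a \<in> ?C" using h lw_trans1 unfolding least_upper_bound_def by blast
  next
    fix a assume "a \<in> Field w"
    then obtain b where "b \<in> Field w" "lw a b" "lw \<beta> b" using bounded[of "{a,\<beta>}"] assms by auto
    then show "\<exists>b\<in>?C. (a,b) \<in> w" by blast
  qed auto
  then show ?thesis using assms unfolding stationary_def by blast
qed

lemma stat_uncountable: "stationary w S \<Longrightarrow> uncountable S"
  using unbounded_uncountable stat_above by (simp add: stationary_def)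

end



context om1 begin

lemma lub_cofinal:
  assumes "least_upper_bound w X a" "Y \<subseteq> X" "\<forall>x\<in>X. \<exists>y\<in>Y. (x,y) \<in> w"
  shows "least_upper_bound w Y a"
  using assms unfolding least_upper_bound_def by (meson subsetD tr)

lemma lub_union:
  assumes "\<forall>x\<in>X. least_upper_bound w (Y x) x" "least_upper_bound w X a"
  shows "least_upper_bound w (\<Union>x\<in>X. Y x) a"
proof -
  have up: "\<forall>y\<in>(\<Union>x\<in>X. Y x). (y,a) \<in> w"
  proof
    fix y assume "y \<in> (\<Union>x\<in>X. Y x)"
    then obtain x where x: "x \<in> X" "y \<in> Y x" by blast
    have "(y,x) \<in> w" using assms(1) x unfolding least_upper_bound_def by blast
    moreover have "(x,a) \<in> w" using assms(2) x(1) unfolding least_upper_bound_def by blast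
    ultimately show "(y,a) \<in> w" by (rule tr)
  qed
  have "\<forall>b\<in>Field w. (\<forall>y\<in>(\<Union>x\<in>X. Y x). (y,b) \<in> w) \<longrightarrow> (a,b) \<in> w"
  proof (intro ballI impI)
    fix b assume b: "b \<in> Field w" "\<forall>y\<in>(\<Union>x\<in>X. Y x). (y,b) \<in> w"
    have "\<forall>x\<in>X. (x,b) \<in> w"
    proof
      fix x assume "x \<in> X"
      then have "least_upper_bound w (Y x) x" using assms by blast
      moreover have "\<forall>y\<in>Y x. (y,b) \<in> w" using b \<open>x \<in> X\<close> by blast
      ultimately show "(x,b) \<in> w" using b(1) unfolding least_upper_bound_def by blast
    qed
    then show "(a,b) \<in> w" using assms(2) b(1) unfolding least_upper_bound_def by blast
  qed
  then show ?thesis using up assms(2) unfolding least_upper_bound_def by blast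
qed

lemma inter_uncountable:
  fixes C :: "nat \<Rightarrow> 'i set"
  assumes S: "stationary w S" and CS: "\<And>n. C n \<subseteq> S" and Cc: "\<And>n. rel_closed w S (C n)"
    and Cu: "\<And>n. uncountable (C n)"
  shows "uncountable (\<Inter>n. C n)"
proof -
  define D where "D n = {a. \<exists>X. X \<subseteq> C n \<and> X \<noteq> {} \<and> least_upper_bound w X a}" for n
  have SD: "\<And>n a. a \<in> S \<Longrightarrow> a \<in> D n \<Longrightarrow> a \<in> C n"
    using Cc unfolding D_def rel_closed_def by blast
  have SF: "S \<subseteq> Field w" using S by (simp add: stationary_def)
  have CF: "\<And>n. C n \<subseteq> Field w" using CS SF by blast
  have key: "\<exists>a\<in>(\<Inter>n. C n). lw \<beta> a" if \<beta>: "\<beta> \<in> Field w" for \<beta>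
  proof -
    define E where "E = {a\<in>Field w. lw \<beta> a \<and> (\<forall>n. a \<in> D n)}"
    have "club w E"
      unfolding club_def rel_closed_def unbounded_def
    proof (intro conjI allI impI ballI)
      show "E \<subseteq> Field w" unfolding E_def by blast
    next
      fix X a assume h: "X \<subseteq> E \<and> X \<noteq> {} \<and> a \<in> Field w \<and> least_upper_bound w X a"
      then obtain x where x: "x \<in> X" by blast
      have la: "lw \<beta> a" using h x lw_trans1 unfolding least_upper_bound_def E_def by blast
      have "a \<in> D n" for n
      proof -
        have "\<forall>x\<in>X. \<exists>Y. Y \<subseteq> C n \<and> Y \<noteq> {} \<and> least_upper_bound w Y x"
          using h unfolding E_def D_def by blast
        from bchoice[OF this] obtain Y where Y: "\<forall>x\<in>X. Y x \<subseteq> C n \<and> Y x \<noteq> {} \<and> least_upper_bound w (Y x) x"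
          by blast
        have "least_upper_bound w (\<Union>x\<in>X. Y x) a" apply (rule lub_union) using Y h by auto
        moreover have "(\<Union>x\<in>X. Y x) \<subseteq> C n" "(\<Union>x\<in>X. Y x) \<noteq> {}" using Y x by auto
        ultimately show ?thesis unfolding D_def by blast
      qed
      then show "a \<in> E" using la h unfolding E_def by blast
    next
      fix a0 assume a0: "a0 \<in> Field w"
      obtain c0 where c0: "c0 \<in> Field w" "lw a0 c0" "lw \<beta> c0" using bounded[of "{a0,\<beta>}"] a0 \<beta> by auto
      define nx where "nx k = fst (prod_decode k)" for k
      define s where "s = rec_nat c0 (\<lambda>k x. SOME c. c \<in> C (nx k) \<and> lw x c)"
      have s0: "s 0 = c0" by (simp add: s_def)
      have sS: "s (Suc k) = (SOME c. c \<in> C (nx k) \<and> lw (s k) c)" for k by (simp add: s_def)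
      have stepF: "s (Suc k) \<in> C (nx k) \<and> lw (s k) (s (Suc k))" if "s k \<in> Field w" for k
      proof -
        have "\<exists>c. c \<in> C (nx k) \<and> lw (s k) c" using exists_above[OF Cu CF that] by blast
        then show ?thesis unfolding sS by (rule someI_ex)
      qed
      have sF: "s k \<in> Field w" for k
      proof (induction k)
        case 0 then show ?case using s0 c0 by simp
      next
        case (Suc k) then show ?case using stepF CF by blast
      qed
      have step: "s (Suc k) \<in> C (nx k) \<and> lw (s k) (s (Suc k))" for k using stepF sF by blast
      have mono: "(s m, s k) \<in> w" if "m \<le> k" for m k
        using that
      proof (induction k rule: dec_induct)
        case base then show ?case using rfl sF by blast
      next
        case (step k)
        have "(s k, s (Suc k)) \<in> w" using \<open>\<And>k. s (Suc k) \<in> C (nx k) \<and> lw (s k) (s (Suc k))\<close> by blast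
        then show ?case using tr step.IH by blast
      qed
      obtain b where lub: "least_upper_bound w (range s) b"
        using lub_exists[of "range s"] sF by blast
      have bF: "b \<in> Field w" using lub unfolding least_upper_bound_def by blast
      have c0b: "(c0, b) \<in> w" using lub s0 unfolding least_upper_bound_def by (metis rangeI)
      have "b \<in> D n" for n
      proof -
        define Y where "Y = {s (Suc k) |k. nx k = n}"
        have "Y \<subseteq> C n" using step unfolding Y_def by blast
        moreover have "s (Suc (prod_encode (n,0))) \<in> Y" unfolding Y_def nx_def by auto
        then have "Y \<noteq> {}" by blast
        moreover have "least_upper_bound w Y b"
        proof (rule lub_cofinal[OF lub])
          show "Y \<subseteq> range s" unfolding Y_def by blast
          show "\<forall>x\<in>range s. \<exists>y\<in>Y. (x, y) \<in> w"
          proof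
            fix x assume "x \<in> range s"
            then obtain m where m: "x = s m" by blast
            define k where "k = prod_encode (n, m)"
            have "nx k = n" unfolding nx_def k_def by simp
            moreover have "m \<le> Suc k" unfolding k_def using le_prod_encode_2[of m n] by simp
            ultimately show "\<exists>y\<in>Y. (x, y) \<in> w" using mono m unfolding Y_def by blast
          qed
        qed
        ultimately show ?thesis unfolding D_def by blast
      qed
      moreover have "lw \<beta> b" using c0 c0b lw_trans1 by blast
      moreover have "(a0, b) \<in> w" using c0 c0b tr by blast
      ultimately show "\<exists>b\<in>E. (a0, b) \<in> w" using bF unfolding E_def by blast
    qed
    then obtain a where "a \<in> S" "a \<in> E" using S unfolding stationary_def by blast
    then show ?thesis using SD unfolding E_def by blast
  qed
  have "(\<Inter>n. C n) \<subseteq> Field w" using CF by blast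
  then show ?thesis using unbounded_uncountable key by blast
qed

end



locale atree = om1 w for w :: "'i rel" +
  fixes T :: "'a set" and lt :: "'a \<Rightarrow> 'a \<Rightarrow> bool"
  assumes ar: "aronszajn w T lt"
begin

definition P where "P t = {s\<in>T. lt s t}"
definition isof where "isof f t \<alpha> \<longleftrightarrow> bij_betw f (P t) (underS w \<alpha>) \<and>
   (\<forall>x\<in>P t. \<forall>y\<in>P t. lt x y \<longleftrightarrow> lw (f x) (f y))"

lemma level_iff: "t \<in> level w T lt \<alpha> \<longleftrightarrow> t \<in> T \<and> (\<exists>f. isof f t \<alpha>)"
  unfolding level_def isof_def P_def by blast

lemma tree: "is_tree T lt" and otree: "omega1_tree w T lt"
  using ar by (auto simp: aronszajn_def omega1_tree_def)

lemma tp1: "\<forall>x\<in>T. \<not> lt x x" using tree unfolding is_tree_def by (rule conjunct1)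
lemma tp2: "\<forall>x\<in>T. \<forall>y\<in>T. \<forall>z\<in>T. lt x y \<and> lt y z \<longrightarrow> lt x z"
  using tree unfolding is_tree_def by (rule conjunct1[OF conjunct2])
lemma tp3: "\<forall>t\<in>T. (\<forall>x\<in>T. \<forall>y\<in>T. lt x t \<and> lt y t \<longrightarrow> lt x y \<or> x = y \<or> lt y x) \<and>
             (\<forall>X. X \<subseteq> {s\<in>T. lt s t} \<and> X \<noteq> {} \<longrightarrow> (\<exists>m\<in>X. \<forall>x\<in>X. \<not> lt x m))"
  using tree unfolding is_tree_def by (rule conjunct2[OF conjunct2])
lemma irr: "t \<in> T \<Longrightarrow> \<not> lt t t" using tp1 by blast
lemma trT: "x \<in> T \<Longrightarrow> y \<in> T \<Longrightarrow> z \<in> T \<Longrightarrow> lt x y \<Longrightarrow> lt y z \<Longrightarrow> lt x z"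
  using tp2 by blast
lemma linP: "t \<in> T \<Longrightarrow> x \<in> T \<Longrightarrow> y \<in> T \<Longrightarrow> lt x t \<Longrightarrow> lt y t \<Longrightarrow> lt x y \<or> x = y \<or> lt y x"
proof -
  assume a: "t \<in> T" "x \<in> T" "y \<in> T" "lt x t" "lt y t"
  have "\<forall>x\<in>T. \<forall>y\<in>T. lt x t \<and> lt y t \<longrightarrow> lt x y \<or> x = y \<or> lt y x" using tp3 a(1) by blast
  then show ?thesis using a by blast
qed
lemma asymT: "x \<in> T \<Longrightarrow> y \<in> T \<Longrightarrow> lt x y \<Longrightarrow> \<not> lt y x" using trT irr by blast

lemma level_sub: "level w T lt \<alpha> \<subseteq> T" unfolding level_def by blast
lemma T_levels: "T = (\<Union>\<alpha>\<in>Field w. level w T lt \<alpha>)" using otree by (simp add: omega1_tree_def)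
lemma level_ne: "\<alpha> \<in> Field w \<Longrightarrow> level w T lt \<alpha> \<noteq> {}" using otree by (simp add: omega1_tree_def)
lemma level_ctbl: "\<alpha> \<in> Field w \<Longrightarrow> countable (level w T lt \<alpha>)" using otree by (simp add: omega1_tree_def)

lemma underS_F: "x \<in> underS w \<alpha> \<Longrightarrow> x \<in> Field w" by (auto simp: underS_def intro: fld1)

lemma mono_self:
  assumes h1: "h ` underS w \<beta> \<subseteq> underS w \<beta>"
    and h2: "\<forall>x\<in>underS w \<beta>. \<forall>y\<in>underS w \<beta>. lw x y \<longrightarrow> lw (h x) (h y)"
  shows "\<forall>x\<in>underS w \<beta>. (x, h x) \<in> w"
proof (rule ccontr)
  let ?Q = "{x\<in>underS w \<beta>. (x, h x) \<notin> w}"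
  assume "\<not> ?thesis"
  then obtain x0 where "x0 \<in> ?Q" by blast
  then obtain m where m1: "m \<in> ?Q" and m2: "\<And>y. (y, m) \<in> w - Id \<Longrightarrow> y \<notin> ?Q"
    by (rule wfE_min[OF wf_w]) blast+
  have hm: "h m \<in> underS w \<beta>" using m1 h1 by blast
  have mF: "m \<in> Field w" "h m \<in> Field w" using m1 hm underS_F by blast+
  have nmh: "(m, h m) \<notin> w" using m1 by blast
  then have "h m \<noteq> m" using rfl mF by metis
  moreover have "(h m, m) \<in> w" using tot[OF mF] nmh by blast
  ultimately have "lw (h m) m" by blast
  then have hh: "lw (h (h m)) (h m)" using h2 m1 hm by blast
  have "(h m, h (h m)) \<notin> w" using hh asym by blast
  then have "h m \<in> ?Q" using hm by blast
  then show False using m2 \<open>lw (h m) m\<close> by blast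
qed

lemma no_embed_down:
  assumes "\<alpha> \<in> Field w" "lw \<alpha> \<beta>"
    and h1: "h ` underS w \<beta> \<subseteq> underS w \<alpha>"
    and h2: "\<forall>x\<in>underS w \<beta>. \<forall>y\<in>underS w \<beta>. lw x y \<longrightarrow> lw (h x) (h y)"
  shows False
proof -
  have sub: "underS w \<alpha> \<subseteq> underS w \<beta>" unfolding underS_def using lw_trans1[of _ \<alpha> \<beta>] assms(2) by blast
  have "\<forall>x\<in>underS w \<beta>. (x, h x) \<in> w" using mono_self h1 h2 sub by blast
  moreover have a: "\<alpha> \<in> underS w \<beta>" using assms(2) by (simp add: underS_def)
  ultimately have "(\<alpha>, h \<alpha>) \<in> w" by blast
  moreover have "lw (h \<alpha>) \<alpha>" using h1 a by (auto simp: underS_def)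
  ultimately show False using asym by blast
qed

lemma level_unique_aux:
  assumes "isof f t \<alpha>" "isof g t \<beta>" "\<alpha> \<in> Field w" "\<beta> \<in> Field w"
  shows "\<not> lw \<alpha> \<beta>"
proof
  assume l: "lw \<alpha> \<beta>"
  let ?h = "\<lambda>x. f (inv_into (P t) g x)"
  have gb: "bij_betw g (P t) (underS w \<beta>)" and fb: "bij_betw f (P t) (underS w \<alpha>)"
    using assms unfolding isof_def by auto
  have inv1: "\<And>x. x \<in> underS w \<beta> \<Longrightarrow> inv_into (P t) g x \<in> P t \<and> g (inv_into (P t) g x) = x"
    using gb by (metis bij_betw_imp_surj_on f_inv_into_f inv_into_into)
  have "?h ` underS w \<beta> \<subseteq> underS w \<alpha>"
    using inv1 fb by (auto dest: bij_betw_imp_surj_on)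
  moreover have "\<forall>x\<in>underS w \<beta>. \<forall>y\<in>underS w \<beta>. lw x y \<longrightarrow> lw (?h x) (?h y)"
  proof (intro ballI impI)
    fix x y assume xy: "x \<in> underS w \<beta>" "y \<in> underS w \<beta>" "lw x y"
    have "lt (inv_into (P t) g x) (inv_into (P t) g y)"
      using assms(2) inv1[OF xy(1)] inv1[OF xy(2)] xy(3) unfolding isof_def by metis
    then show "lw (?h x) (?h y)" using assms(1) inv1[OF xy(1)] inv1[OF xy(2)] unfolding isof_def by blast
  qed
  ultimately show False using no_embed_down[OF assms(3) l] by blast
qed

lemma level_unique:
  assumes "t \<in> level w T lt \<alpha>" "t \<in> level w T lt \<beta>" "\<alpha> \<in> Field w" "\<beta> \<in> Field w"
  shows "\<alpha> = \<beta>"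
proof -
  obtain f g where "isof f t \<alpha>" "isof g t \<beta>" using assms level_iff by blast
  then show ?thesis using level_unique_aux assms tot by metis
qed

lemma pred_level:
  assumes "isof f t \<gamma>" "t \<in> T" "\<beta> \<in> underS w \<gamma>"
  shows "inv_into (P t) f \<beta> \<in> P t \<and> f (inv_into (P t) f \<beta>) = \<beta> \<and> inv_into (P t) f \<beta> \<in> level w T lt \<beta>"
proof -
  have fb: "bij_betw f (P t) (underS w \<gamma>)" and fi: "\<forall>x\<in>P t. \<forall>y\<in>P t. lt x y \<longleftrightarrow> lw (f x) (f y)"
    using assms unfolding isof_def by auto
  define p where "p = inv_into (P t) f \<beta>"
  have p: "p \<in> P t" "f p = \<beta>" unfolding p_def using fb assms(3)
    by (metis bij_betw_imp_surj_on f_inv_into_f inv_into_into)+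
  have pT: "p \<in> T" "lt p t" using p by (auto simp: P_def)
  have Pp: "P p = {s\<in>P t. lt s p}"
  proof (rule set_eqI)
    fix s
    show "s \<in> P p \<longleftrightarrow> s \<in> {s\<in>P t. lt s p}"
      unfolding P_def mem_Collect_eq using trT[of s p t] pT assms(2) by blast
  qed
  have PpPt: "P p \<subseteq> P t" using Pp by blast
  have "bij_betw f (P p) (underS w \<beta>)"
    unfolding bij_betw_def
  proof
    show "inj_on f (P p)" using inj_on_subset[OF bij_betw_imp_inj_on[OF fb] PpPt] .
    show "f ` P p = underS w \<beta>"
    proof
      show "f ` P p \<subseteq> underS w \<beta>"
      proof
        fix y assume "y \<in> f ` P p"
        then obtain s where s: "s \<in> P p" "y = f s" by blast
        have "s \<in> P t" "lt s p" using s(1) Pp by auto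
        then have "lw (f s) (f p)" using fi p(1) by blast
        then show "y \<in> underS w \<beta>" using s(2) p(2) by (simp add: underS_def)
      qed
    next
      show "underS w \<beta> \<subseteq> f ` P p"
      proof
        fix x assume x: "x \<in> underS w \<beta>"
        have "(\<beta>, \<gamma>) \<in> w" using assms(3) by (simp add: underS_def)
        moreover have "lw x \<beta>" using x by (simp add: underS_def)
        ultimately have "lw x \<gamma>" using lw_trans1 by blast
        then have "x \<in> underS w \<gamma>" by (simp add: underS_def)
        then have "x \<in> f ` P t" using bij_betw_imp_surj_on[OF fb] by simp
        then obtain s where s: "s \<in> P t" "f s = x" by blast
        have "lw (f s) (f p)" using s(2) p(2) \<open>lw x \<beta>\<close> by simp
        then have "lt s p" using fi p(1) s(1) by blast
        then show "x \<in> f ` P p" using s Pp by blast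
      qed
    qed
  qed
  moreover have "\<forall>x\<in>P p. \<forall>y\<in>P p. lt x y \<longleftrightarrow> lw (f x) (f y)" using fi Pp by blast
  ultimately have "isof f p \<beta>" unfolding isof_def by blast
  then show ?thesis using p pT level_iff unfolding p_def[symmetric] by blast
qed

definition ht where "ht t = (THE \<alpha>. \<alpha> \<in> Field w \<and> t \<in> level w T lt \<alpha>)"

lemma ht_eq: "t \<in> level w T lt \<alpha> \<Longrightarrow> \<alpha> \<in> Field w \<Longrightarrow> ht t = \<alpha>"
  unfolding ht_def using level_unique by blast

lemma ht_prop: "t \<in> T \<Longrightarrow> ht t \<in> Field w \<and> t \<in> level w T lt (ht t)"
proof -
  assume "t \<in> T"
  then obtain \<alpha> where "\<alpha> \<in> Field w" "t \<in> level w T lt \<alpha>" using T_levels by blast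
  then show ?thesis using ht_eq by simp
qed

lemma lt_ht:
  assumes "s \<in> T" "t \<in> T" "lt s t"
  shows "lw (ht s) (ht t)"
proof -
  obtain f where f: "isof f t (ht t)" using ht_prop[OF assms(2)] level_iff by blast
  have sP: "s \<in> P t" using assms by (simp add: P_def)
  have fs: "f s \<in> underS w (ht t)" using f sP unfolding isof_def by (metis bij_betw_imp_surj_on imageI)
  have "inv_into (P t) f (f s) = s" using f sP unfolding isof_def by (meson bij_betw_imp_inj_on inv_into_f_f)
  then have "s \<in> level w T lt (f s)" using pred_level[OF f assms(2) fs] by simp
  then have "ht s = f s" using ht_eq underS_F fs by blast
  then show ?thesis using fs by (simp add: underS_def)
qed

lemma pred_exists:
  assumes "t \<in> T" "lw \<beta> (ht t)"
  shows "\<exists>p\<in>T. lt p t \<and> ht p = \<beta>"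
proof -
  obtain f where f: "isof f t (ht t)" using ht_prop[OF assms(1)] level_iff by blast
  have "\<beta> \<in> underS w (ht t)" using assms by (simp add: underS_def)
  from pred_level[OF f assms(1) this] show ?thesis
    using ht_eq fld1 assms(2) unfolding P_def by blast
qed

lemma comp_below:
  assumes "x \<in> T" "y \<in> T" "z \<in> T" "x = z \<or> lt x z" "y = z \<or> lt y z"
  shows "lt x y \<or> x = y \<or> lt y x"
  using assms linP by blast

lemma lt_of_ht:
  assumes "x \<in> T" "y \<in> T" "lt x y \<or> x = y \<or> lt y x" "lw (ht x) (ht y)"
  shows "lt x y"
  using assms lt_ht asym by blast

lemma chain_countable:
  assumes "Ch \<subseteq> T" "\<forall>x\<in>Ch. \<forall>y\<in>Ch. lt x y \<or> x = y \<or> lt y x"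
  shows "countable Ch"
proof -
  define B where "B = {s\<in>T. \<exists>c\<in>Ch. s = c \<or> lt s c}"
  have "branch T lt B"
    unfolding branch_def
  proof (intro conjI ballI impI)
    show "B \<subseteq> T" unfolding B_def by blast
  next
    fix x y assume xy: "x \<in> B" "y \<in> B"
    then obtain c d where cd: "c \<in> Ch" "d \<in> Ch" "x = c \<or> lt x c" "y = d \<or> lt y d" "x \<in> T" "y \<in> T"
      unfolding B_def by blast
    have "c \<in> T" "d \<in> T" using cd assms by auto
    have "lt c d \<or> c = d \<or> lt d c" using assms cd by blast
    then show "lt x y \<or> x = y \<or> lt y x"
    proof (elim disjE)
      assume "lt c d"
      then have "x = d \<or> lt x d" using cd trT \<open>c \<in> T\<close> \<open>d \<in> T\<close> by blast
      then show ?thesis using comp_below[of x y d] cd \<open>d \<in> T\<close> by blast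
    next
      assume "c = d" then show ?thesis using comp_below[of x y d] cd \<open>d \<in> T\<close> by blast
    next
      assume "lt d c"
      then have "y = c \<or> lt y c" using cd trT \<open>c \<in> T\<close> \<open>d \<in> T\<close> by blast
      then show ?thesis using comp_below[of x y c] cd \<open>c \<in> T\<close> by blast
    qed
  next
    fix x s assume h: "x \<in> B" "s \<in> T" "lt s x"
    then obtain c where "c \<in> Ch" "x = c \<or> lt x c" "x \<in> T" unfolding B_def by blast
    then show "s \<in> B" using h trT assms unfolding B_def by blast
  qed
  then have "countable B" using ar by (simp add: aronszajn_def)
  moreover have "Ch \<subseteq> B" using assms unfolding B_def by blast
  ultimately show ?thesis using countable_subset by blast
qed

end



context atree begin

abbreviation le where "le s t \<equiv> s = t \<or> lt s t"

definition Hs where "Hs u = {x. x \<subseteq> Field w \<and> countable x \<and> (\<forall>t\<in>T. finite {\<alpha>\<in>x. lt (u \<alpha>) t})}"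

lemma pigeon:
  assumes "f ` A \<subseteq> L" "countable L" "uncountable A"
  shows "\<exists>y\<in>L. uncountable {a\<in>A. f a = y}"
proof (rule ccontr)
  assume "\<not> ?thesis"
  then have "countable (\<Union>y\<in>L. {a\<in>A. f a = y})" using assms(2) by blast
  moreover have "A \<subseteq> (\<Union>y\<in>L. {a\<in>A. f a = y})" using assms(1) by blast
  ultimately show False using assms(3) countable_subset by blast
qed

lemma u_facts:
  assumes hu: "\<forall>\<alpha>\<in>Field w. u \<alpha> \<in> level w T lt \<alpha>" and a: "\<alpha> \<in> Field w"
  shows "u \<alpha> \<in> T" "ht (u \<alpha>) = \<alpha>"
  using hu a level_sub ht_eq by blast+

lemma pigeon_pred:
  assumes hu: "\<forall>\<alpha>\<in>Field w. u \<alpha> \<in> level w T lt \<alpha>" and b0: "\<beta>0 \<in> Field w"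
    and B: "B \<subseteq> Field w" "uncountable B" "\<forall>\<alpha>\<in>B. lw \<beta>0 \<alpha>"
  shows "\<exists>y\<in>T. ht y = \<beta>0 \<and> uncountable {\<alpha>\<in>B. lt y (u \<alpha>)}"
proof -
  define p where "p \<alpha> = (SOME p. p \<in> T \<and> lt p (u \<alpha>) \<and> ht p = \<beta>0)" for \<alpha>
  have pp: "p \<alpha> \<in> T \<and> lt (p \<alpha>) (u \<alpha>) \<and> ht (p \<alpha>) = \<beta>0" if "\<alpha> \<in> B" for \<alpha>
  proof -
    have "\<alpha> \<in> Field w" using that B by blast
    then have "\<exists>p\<in>T. lt p (u \<alpha>) \<and> ht p = \<beta>0"
      using pred_exists[of "u \<alpha>" \<beta>0] u_facts[OF hu] B that by simp
    then have "\<exists>p. p \<in> T \<and> lt p (u \<alpha>) \<and> ht p = \<beta>0" by blast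
    then show ?thesis unfolding p_def by (rule someI_ex)
  qed
  have pB: "p ` B \<subseteq> level w T lt \<beta>0"
  proof
    fix x assume "x \<in> p ` B"
    then obtain \<alpha> where a: "\<alpha> \<in> B" "x = p \<alpha>" by blast
    have "p \<alpha> \<in> T" "ht (p \<alpha>) = \<beta>0" using pp[OF a(1)] by blast+
    then show "x \<in> level w T lt \<beta>0" using ht_prop[of "p \<alpha>"] a(2) by simp
  qed
  from pigeon[OF pB level_ctbl[OF b0] B(2)] obtain y where y: "y \<in> level w T lt \<beta>0" "uncountable {a\<in>B. p a = y}"
    by (elim bexE) iprover
  have "{a\<in>B. p a = y} \<subseteq> {\<alpha>\<in>B. lt y (u \<alpha>)}" using pp by blast
  then have "uncountable {\<alpha>\<in>B. lt y (u \<alpha>)}" using y(2) countable_subset by blast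
  moreover have "y \<in> T" "ht y = \<beta>0" using y(1) level_sub ht_eq b0 by blast+
  ultimately show ?thesis by blast
qed

lemma K_start:
  assumes hu: "\<forall>\<alpha>\<in>Field w. u \<alpha> \<in> level w T lt \<alpha>" and B: "B \<subseteq> Field w" "uncountable B"
  shows "\<exists>s\<in>T. uncountable {\<alpha>\<in>B. le s (u \<alpha>)}"
proof -
  have "Field w \<noteq> {}"
  proof
    assume "Field w = {}"
    then have "countable (Field w)" by simp
    then show False using unc by blast
  qed
  then obtain \<beta>0 where b0: "\<beta>0 \<in> Field w" by blast
  have u1: "uncountable {\<alpha>\<in>B. lw \<beta>0 \<alpha>}" using uncountable_above[OF B(2) B(1) b0] .
  have u2: "{\<alpha>\<in>B. lw \<beta>0 \<alpha>} \<subseteq> Field w" using B by blast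
  have u3: "\<forall>\<alpha>\<in>{\<alpha>\<in>B. lw \<beta>0 \<alpha>}. lw \<beta>0 \<alpha>" by blast
  obtain y where "y \<in> T" "uncountable {\<alpha>\<in>{\<alpha>\<in>B. lw \<beta>0 \<alpha>}. lt y (u \<alpha>)}"
    using pigeon_pred[OF hu b0 u2 u1 u3] by blast
  moreover have "{\<alpha>\<in>{\<alpha>\<in>B. lw \<beta>0 \<alpha>}. lt y (u \<alpha>)} \<subseteq> {\<alpha>\<in>B. le y (u \<alpha>)}" by blast
  ultimately show ?thesis using countable_subset by blast
qed

definition incomp where "incomp a b \<longleftrightarrow> a \<noteq> b \<and> \<not> lt a b \<and> \<not> lt b a"

lemma K_split:
  assumes hu: "\<forall>\<alpha>\<in>Field w. u \<alpha> \<in> level w T lt \<alpha>" and B: "B \<subseteq> Field w"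
    and s: "s \<in> T" "uncountable {\<alpha>\<in>B. le s (u \<alpha>)}"
  shows "\<exists>a b. a \<in> T \<and> b \<in> T \<and> le s a \<and> le s b \<and> uncountable {\<alpha>\<in>B. le a (u \<alpha>)}
     \<and> uncountable {\<alpha>\<in>B. le b (u \<alpha>)} \<and> incomp a b"
proof (rule ccontr)
  assume nt: "\<not> ?thesis"
  define Ks where "Ks = {a\<in>T. le s a \<and> uncountable {\<alpha>\<in>B. le a (u \<alpha>)}}"
  have ch: "\<forall>x\<in>Ks. \<forall>y\<in>Ks. lt x y \<or> x = y \<or> lt y x"
  proof (intro ballI)
    fix x y assume xy: "x \<in> Ks" "y \<in> Ks"
    show "lt x y \<or> x = y \<or> lt y x"
    proof (rule ccontr)
      assume "\<not> (lt x y \<or> x = y \<or> lt y x)"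
      then have i: "incomp x y" unfolding incomp_def by blast
      have f: "x \<in> T" "y \<in> T" "le s x" "le s y" "uncountable {\<alpha>\<in>B. le x (u \<alpha>)}"
        "uncountable {\<alpha>\<in>B. le y (u \<alpha>)}" using xy unfolding Ks_def by blast+
      have "\<exists>a b. a \<in> T \<and> b \<in> T \<and> le s a \<and> le s b \<and> uncountable {\<alpha>\<in>B. le a (u \<alpha>)}
        \<and> uncountable {\<alpha>\<in>B. le b (u \<alpha>)} \<and> incomp a b"
        using f i by (intro exI[of _ x] exI[of _ y]) blast
      then show False using nt by blast
    qed
  qed
  have KsT: "Ks \<subseteq> T" unfolding Ks_def by blast
  have "countable Ks" using chain_countable[OF KsT ch] .
  then have cK: "countable (ht ` Ks)" by (rule countable_image)
  have hK: "ht ` Ks \<subseteq> Field w"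
  proof
    fix x assume "x \<in> ht ` Ks"
    then obtain a where "a \<in> Ks" "x = ht a" by blast
    then show "x \<in> Field w" using ht_prop KsT by blast
  qed
  from bounded[OF hK cK] obtain \<beta>0 where b0': "\<beta>0 \<in> Field w" "\<forall>x\<in>ht ` Ks. lw x \<beta>0"
    by blast
  have b0: "\<beta>0 \<in> Field w" "\<forall>a\<in>Ks. lw (ht a) \<beta>0" using b0' by auto
  have sK: "s \<in> Ks" using s unfolding Ks_def by blast
  define Bs where "Bs = {\<alpha>\<in>{\<alpha>\<in>B. le s (u \<alpha>)}. lw \<beta>0 \<alpha>}"
  have BsF0: "{\<alpha>\<in>B. le s (u \<alpha>)} \<subseteq> Field w" using B by blast
  have Bsu: "uncountable Bs" unfolding Bs_def using uncountable_above[OF s(2) BsF0 b0(1)] .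
  have BsF: "Bs \<subseteq> Field w" using BsF0 unfolding Bs_def by blast
  have Bsl: "\<forall>\<alpha>\<in>Bs. lw \<beta>0 \<alpha>" unfolding Bs_def by blast
  obtain y where y: "y \<in> T" "ht y = \<beta>0" "uncountable {\<alpha>\<in>Bs. lt y (u \<alpha>)}"
    using pigeon_pred[OF hu b0(1) BsF Bsu Bsl] by blast
  have "{\<alpha>\<in>Bs. lt y (u \<alpha>)} \<noteq> {}"
  proof
    assume e: "{\<alpha>\<in>Bs. lt y (u \<alpha>)} = {}"
    have "countable {\<alpha>\<in>Bs. lt y (u \<alpha>)}" unfolding e by (rule countable_empty)
    then show False using y(3) by blast
  qed
  then obtain \<alpha> where al: "\<alpha> \<in> Bs" "lt y (u \<alpha>)" by blast
  have aF: "\<alpha> \<in> Field w" using al B unfolding Bs_def by blast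
  have uT: "u \<alpha> \<in> T" and hua: "ht (u \<alpha>) = \<alpha>" using u_facts[OF hu aF] by auto
  have hs: "lw (ht s) \<beta>0" using b0 sK by blast
  have lsu: "le s (u \<alpha>)" "lw \<beta>0 \<alpha>" using al unfolding Bs_def by auto
  have "s \<noteq> u \<alpha>"
  proof
    assume "s = u \<alpha>"
    then have "lw \<alpha> \<beta>0" using hs hua by simp
    then show False using lsu(2) asym by blast
  qed
  then have "lt s (u \<alpha>)" using lsu by blast
  then have "lt s y \<or> s = y \<or> lt y s" using linP[OF uT s(1) y(1)] al by blast
  then have sy: "lt s y" using lt_of_ht[OF s(1) y(1)] hs y(2) by blast
  have "{\<alpha>\<in>Bs. lt y (u \<alpha>)} \<subseteq> {\<alpha>\<in>B. le y (u \<alpha>)}" unfolding Bs_def by blast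
  then have "uncountable {\<alpha>\<in>B. le y (u \<alpha>)}" using y(3) countable_subset by blast
  then have "y \<in> Ks" using y(1) sy unfolding Ks_def by blast
  then show False using b0(2) y(2) by blast
qed

lemma le_trans: "x \<in> T \<Longrightarrow> y \<in> T \<Longrightarrow> z \<in> T \<Longrightarrow> le x y \<Longrightarrow> le y z \<Longrightarrow> le x z"
  using trT by blast

lemma le_lt_trans: "x \<in> T \<Longrightarrow> y \<in> T \<Longrightarrow> z \<in> T \<Longrightarrow> le x y \<Longrightarrow> lt y z \<Longrightarrow> lt x z"
  using trT by blast

lemma antichain_in:
  assumes hu: "\<forall>\<alpha>\<in>Field w. u \<alpha> \<in> level w T lt \<alpha>" and B: "B \<subseteq> Field w" "uncountable B"
  shows "\<exists>x. x \<subseteq> B \<and> infinite x \<and> countable x \<and> (\<forall>t\<in>T. finite {\<alpha>\<in>x. lt (u \<alpha>) t})"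
proof -
  define good where "good a \<longleftrightarrow> a \<in> T \<and> uncountable {\<alpha>\<in>B. le a (u \<alpha>)}" for a
  from K_start[OF hu B] obtain s0 where s0T: "s0 \<in> T" and s0u: "uncountable {\<alpha>\<in>B. le s0 (u \<alpha>)}" by metis
  have s0: "good s0" unfolding good_def using s0T s0u by (rule conjI)
  define sp where "sp s = (SOME ab. good (fst ab) \<and> good (snd ab) \<and> le s (fst ab) \<and> le s (snd ab)
       \<and> incomp (fst ab) (snd ab))" for s
  have spP: "good (fst (sp s)) \<and> good (snd (sp s)) \<and> le s (fst (sp s)) \<and> le s (snd (sp s))
       \<and> incomp (fst (sp s)) (snd (sp s))" if gs: "good s" for s
  proof -
    have g1: "s \<in> T" "uncountable {\<alpha>\<in>B. le s (u \<alpha>)}"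
      using gs[unfolded good_def] by (rule conjunct1, rule conjunct2)
    from K_split[OF hu B(1) g1] obtain a b where ab: "a \<in> T \<and> b \<in> T \<and> le s a \<and> le s b \<and> uncountable {\<alpha>\<in>B. le a (u \<alpha>)}
     \<and> uncountable {\<alpha>\<in>B. le b (u \<alpha>)} \<and> incomp a b" by (elim exE) iprover
    then have "good a \<and> good b \<and> le s a \<and> le s b \<and> incomp a b" unfolding good_def by metis
    then have "good (fst (a,b)) \<and> good (snd (a,b)) \<and> le s (fst (a,b)) \<and> le s (snd (a,b))
       \<and> incomp (fst (a,b)) (snd (a,b))" by (simp only: fst_conv snd_conv)
    then have "\<exists>ab. good (fst ab) \<and> good (snd ab) \<and> le s (fst ab) \<and> le s (snd ab)
       \<and> incomp (fst ab) (snd ab)" by (rule exI)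
    then show ?thesis unfolding sp_def by (rule someI_ex)
  qed
  define bs where "bs = rec_nat s0 (\<lambda>k b. snd (sp b))"
  have bs0: "bs 0 = s0" and bsS: "bs (Suc k) = snd (sp (bs k))" for k by (simp_all add: bs_def)
  define as where "as k = fst (sp (bs k))" for k
  have gb: "good (bs k)" for k
  proof (induction k)
    case 0 then show ?case using s0 bs0 by simp
  next
    case (Suc k) then show ?case using spP bsS by simp
  qed
  have ak: "good (as k) \<and> le (bs k) (as k) \<and> le (bs k) (bs (Suc k)) \<and> incomp (as k) (bs (Suc k))" for k
    using spP[OF gb[of k]] unfolding as_def bsS by simp
  have bT: "bs k \<in> T" and aT: "as k \<in> T" for k using gb ak unfolding good_def by blast+
  have bmono: "le (bs i) (bs j)" if "i \<le> j" for i j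
    using that
  proof (induction j rule: dec_induct)
    case base then show ?case by simp
  next
    case (step k) then show ?case using ak[of k] le_trans[OF bT bT bT] by blast
  qed
  have aanti: "incomp (as i) (as j)" if "i < j" for i j
  proof -
    have "le (bs (Suc i)) (bs j)" using bmono that by simp
    then have l1: "le (bs (Suc i)) (as j)" using ak[of j] le_trans[OF bT bT aT] by blast
    have inc: "incomp (as i) (bs (Suc i))" using ak by blast
    have n1: "\<not> le (as i) (as j)"
    proof
      assume "le (as i) (as j)"
      then have "lt (as i) (bs (Suc i)) \<or> as i = bs (Suc i) \<or> lt (bs (Suc i)) (as i)"
        using comp_below[OF aT bT aT] l1 by blast
      then show False using inc unfolding incomp_def by blast
    qed
    have n2: "\<not> lt (as j) (as i)"
    proof
      assume "lt (as j) (as i)"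
      then have "lt (bs (Suc i)) (as i)" using le_lt_trans[OF bT aT aT l1] by blast
      then show False using inc unfolding incomp_def by blast
    qed
    show ?thesis using n1 n2 unfolding incomp_def by blast
  qed
  define al where "al k = (SOME \<alpha>. \<alpha> \<in> B \<and> le (as k) (u \<alpha>))" for k
  have alP: "al k \<in> B \<and> le (as k) (u (al k))" for k
  proof -
    have "uncountable {\<alpha>\<in>B. le (as k) (u \<alpha>)}" using ak[of k] unfolding good_def by blast
    have "{\<alpha>\<in>B. le (as k) (u \<alpha>)} \<noteq> {}"
    proof
      assume e: "{\<alpha>\<in>B. le (as k) (u \<alpha>)} = {}"
      have "countable {\<alpha>\<in>B. le (as k) (u \<alpha>)}" unfolding e by (rule countable_empty)
      then show False using \<open>uncountable {\<alpha>\<in>B. le (as k) (u \<alpha>)}\<close> by blast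
    qed
    then have "\<exists>\<alpha>. \<alpha> \<in> B \<and> le (as k) (u \<alpha>)" by blast
    then show ?thesis unfolding al_def by (rule someI_ex)
  qed
  have alF: "al k \<in> Field w" for k using alP B by blast
  have uT: "u (al k) \<in> T" for k using u_facts[OF hu alF] by blast
  have uinc: "incomp (u (al i)) (u (al j))" if "i < j" for i j
  proof -
    have inc: "incomp (as i) (as j)" using aanti that by blast
    have n1: "\<not> le (u (al i)) (u (al j))"
    proof
      assume h: "le (u (al i)) (u (al j))"
      have "le (as i) (u (al j))" using le_trans[OF aT uT uT] alP h by blast
      then have "lt (as i) (as j) \<or> as i = as j \<or> lt (as j) (as i)"
        using comp_below[OF aT aT uT] alP by blast
      then show False using inc unfolding incomp_def by blast
    qed
    have n2: "\<not> lt (u (al j)) (u (al i))"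
    proof
      assume h: "lt (u (al j)) (u (al i))"
      have "lt (as j) (u (al i))" using le_lt_trans[OF aT uT uT] alP h by blast
      then have "lt (as i) (as j) \<or> as i = as j \<or> lt (as j) (as i)"
        using comp_below[OF aT aT uT] alP by blast
      then show False using inc unfolding incomp_def by blast
    qed
    show ?thesis using n1 n2 unfolding incomp_def by blast
  qed
  have uinc2: "incomp (u (al i)) (u (al j))" if "i \<noteq> j" for i j
  proof -
    have "i < j \<or> j < i" using that by arith
    then show ?thesis using uinc[of i j] uinc[of j i] unfolding incomp_def by auto
  qed
  have "inj al"
  proof (rule injI)
    fix i j assume "al i = al j"
    then show "i = j" using uinc2[of i j] unfolding incomp_def by auto
  qed
  then have inf: "infinite (range al)" using range_inj_infinite by blast
  have fin: "finite {\<alpha>\<in>range al. lt (u \<alpha>) t}" if tT: "t \<in> T" for t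
  proof (cases "{\<alpha>\<in>range al. lt (u \<alpha>) t} = {}")
    case True then show ?thesis by (metis finite.emptyI)
  next
    case False
    then obtain a where a: "a \<in> {\<alpha>\<in>range al. lt (u \<alpha>) t}" by blast
    have "{\<alpha>\<in>range al. lt (u \<alpha>) t} \<subseteq> {a}"
    proof
      fix b assume b: "b \<in> {\<alpha>\<in>range al. lt (u \<alpha>) t}"
      obtain i j where ij: "a = al i" "b = al j" using a b by blast
      have "lt (u a) (u b) \<or> u a = u b \<or> lt (u b) (u a)"
        using linP[OF tT] a b ij uT by blast
      then have "i = j" using uinc2[of i j] ij unfolding incomp_def by blast
      then show "b \<in> {a}" using ij by simp
    qed
    then show ?thesis using finite_subset by blast
  qed
  have "range al \<subseteq> B" using alP by blast
  then show ?thesis using inf fin by blast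
qed

end



context atree begin

lemma sigma_dir:
  assumes hu: "\<forall>\<alpha>\<in>Field w. u \<alpha> \<in> level w T lt \<alpha>"
  shows "sigma_directed w (Hs u)"
  unfolding sigma_directed_def
proof (intro conjI allI impI)
  show "\<forall>x\<in>Hs u. x \<subseteq> Field w \<and> countable x" unfolding Hs_def by blast
next
  fix G assume G: "G \<subseteq> Hs u \<and> countable G"
  show "\<exists>y\<in>Hs u. \<forall>x\<in>G. almost_subset x y"
  proof (cases "G = {}")
    case True
    have "{} \<in> Hs u" unfolding Hs_def by simp
    then show ?thesis using True by blast
  next
    case False
    define g where "g = from_nat_into G"
    have cG: "countable G" using G by blast
    have rg: "range g = G" unfolding g_def by (rule range_from_nat_into[OF False cG])
    have gH: "g k \<in> Hs u" for k using rg G by blast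
    have gF: "g k \<subseteq> Field w" "countable (g k)" "\<forall>t\<in>T. finite {\<alpha>\<in>g k. lt (u \<alpha>) t}" for k
      using gH[of k] unfolding Hs_def by auto
    have Uc: "countable (\<Union>k. g k)" using gF by blast
    have UF: "(\<Union>k. g k) \<subseteq> Field w" using gF by blast
    from bounded[OF UF Uc] obtain \<delta> where d: "\<delta> \<in> Field w" "\<forall>\<alpha>\<in>(\<Union>k. g k). lw \<alpha> \<delta>"
      by (elim bexE) iprover
    define L where "L = {t\<in>T. (ht t, \<delta>) \<in> w}"
    have "L \<subseteq> (\<Union>\<alpha>\<in>underS w \<delta> \<union> {\<delta>}. level w T lt \<alpha>)"
    proof
      fix t assume t: "t \<in> L"
      then have "t \<in> level w T lt (ht t)" "ht t \<in> underS w \<delta> \<union> {\<delta>}"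
        using ht_prop unfolding L_def underS_def by auto
      then show "t \<in> (\<Union>\<alpha>\<in>underS w \<delta> \<union> {\<delta>}. level w T lt \<alpha>)" by blast
    qed
    moreover have "countable (\<Union>\<alpha>\<in>underS w \<delta> \<union> {\<delta>}. level w T lt \<alpha>)"
      using cseg[OF d(1)] level_ctbl underS_F d(1) by blast
    ultimately have Lc: "countable L" using countable_subset by blast
    obtain t0 where "t0 \<in> level w T lt \<delta>" using level_ne[OF d(1)] by blast
    then have "t0 \<in> L" using level_sub ht_eq d(1) rfl unfolding L_def by fastforce
    then have LN: "L \<noteq> {}" by blast
    define e where "e = from_nat_into L"
    have re: "range e = L" unfolding e_def by (rule range_from_nat_into[OF LN Lc])
    have eT: "e j \<in> T" for j using re unfolding L_def by blast
    define F where "F k = (\<Union>j<k. {\<alpha>\<in>g k. lt (u \<alpha>) (e j)})" for k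
    have Ff: "finite (F k)" for k unfolding F_def using gF(3) eT by blast
    define y where "y = (\<Union>k. g k - F k)"
    have yF: "y \<subseteq> Field w" "countable y" unfolding y_def using gF by auto
    have yd: "\<forall>\<alpha>\<in>y. lw \<alpha> \<delta>" using d unfolding y_def by blast
    have fe: "finite {\<alpha>\<in>y. lt (u \<alpha>) (e j)}" for j
    proof -
      have "{\<alpha>\<in>y. lt (u \<alpha>) (e j)} \<subseteq> (\<Union>k\<in>{..j}. {\<alpha>\<in>g k. lt (u \<alpha>) (e j)})"
      proof
        fix \<alpha> assume a: "\<alpha> \<in> {\<alpha>\<in>y. lt (u \<alpha>) (e j)}"
        then obtain k where k: "\<alpha> \<in> g k" "\<alpha> \<notin> F k" unfolding y_def by blast
        have "k \<le> j"
        proof (rule ccontr)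
          assume "\<not> k \<le> j"
          then have "j < k" by simp
          then have "\<alpha> \<in> F k" using k a unfolding F_def by blast
          then show False using k by blast
        qed
        then show "\<alpha> \<in> (\<Union>k\<in>{..j}. {\<alpha>\<in>g k. lt (u \<alpha>) (e j)})" using k a by blast
      qed
      moreover have "finite (\<Union>k\<in>{..j}. {\<alpha>\<in>g k. lt (u \<alpha>) (e j)})" using gF(3) eT by blast
      ultimately show ?thesis using finite_subset by blast
    qed
    have yH: "y \<in> Hs u"
      unfolding Hs_def
    proof (intro CollectI conjI ballI)
      show "y \<subseteq> Field w" "countable y" using yF by auto
    next
      fix t assume tT: "t \<in> T"
      show "finite {\<alpha>\<in>y. lt (u \<alpha>) t}"
      proof (cases "(ht t, \<delta>) \<in> w")
        case True
        then have "t \<in> range e" using re tT unfolding L_def by blast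
        then show ?thesis using fe by blast
      next
        case False
        then have "lw \<delta> (ht t)" using not_lw[of "ht t" \<delta>] ht_prop[OF tT] d(1) rfl by metis
        then obtain p where p: "p \<in> T" "lt p t" "ht p = \<delta>" using pred_exists[OF tT] by blast
        then have "p \<in> range e" using re rfl d(1) unfolding L_def by auto
        then obtain j where j: "p = e j" by blast
        have "{\<alpha>\<in>y. lt (u \<alpha>) t} \<subseteq> {\<alpha>\<in>y. lt (u \<alpha>) (e j)}"
        proof
          fix \<alpha> assume a: "\<alpha> \<in> {\<alpha>\<in>y. lt (u \<alpha>) t}"
          have aF: "\<alpha> \<in> Field w" using a yF by blast
          have uT: "u \<alpha> \<in> T" and hua: "ht (u \<alpha>) = \<alpha>" using u_facts[OF hu aF] by auto
          have "lt (u \<alpha>) p \<or> u \<alpha> = p \<or> lt p (u \<alpha>)" using linP[OF tT uT p(1)] a p by blast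
          moreover have "lw (ht (u \<alpha>)) (ht p)" using hua p(3) yd a by simp
          ultimately have "lt (u \<alpha>) p" using lt_of_ht[OF uT p(1)] by blast
          then show "\<alpha> \<in> {\<alpha>\<in>y. lt (u \<alpha>) (e j)}" using a j by blast
        qed
        then show ?thesis using fe finite_subset by blast
      qed
    qed
    have "\<forall>x\<in>G. almost_subset x y"
    proof
      fix x assume "x \<in> G"
      then obtain k where k: "x = g k" using rg by blast
      have "g k - y \<subseteq> F k" unfolding y_def by blast
      then show "almost_subset x y" unfolding almost_subset_def k using Ff finite_subset by blast
    qed
    then show ?thesis using yH by blast
  qed
qed

lemma local_finite:
  assumes "locally_in (down (Hs u)) C" "t \<in> T"
  shows "finite {\<alpha>\<in>C. lt (u \<alpha>) t}"
proof (rule ccontr)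
  assume "infinite {\<alpha>\<in>C. lt (u \<alpha>) t}"
  then obtain f :: "nat \<Rightarrow> 'i" where f: "inj f" "range f \<subseteq> {\<alpha>\<in>C. lt (u \<alpha>) t}"
    using infinite_countable_subset by blast
  have "range f \<in> down (Hs u)" using assms(1) f unfolding locally_in_def by blast
  then obtain x where x: "x \<in> Hs u" "range f \<subseteq> x" unfolding down_def by blast
  have "range f \<subseteq> {\<alpha>\<in>x. lt (u \<alpha>) t}" using f x by blast
  moreover have "finite {\<alpha>\<in>x. lt (u \<alpha>) t}" using x assms(2) unfolding Hs_def by blast
  ultimately have "finite (range f)" using finite_subset by blast
  then show False using f range_inj_infinite by blast
qed

lemma special_piece:
  assumes hu: "\<forall>\<alpha>\<in>Field w. u \<alpha> \<in> level w T lt \<alpha>" and CF: "C \<subseteq> Field w"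
    and fin: "\<forall>t\<in>T. finite {\<alpha>\<in>C. lt (u \<alpha>) t}"
  shows "special lt (u ` C)"
proof -
  define X where "X = u ` C"
  have XT: "X \<subseteq> T" using u_facts[OF hu] CF unfolding X_def by blast
  have fx: "finite {x\<in>X. lt x v}" if "v \<in> T" for v
  proof -
    have "{x\<in>X. lt x v} = u ` {\<alpha>\<in>C. lt (u \<alpha>) v}" unfolding X_def by blast
    then show ?thesis using fin that by simp
  qed
  define A where "A m = {v\<in>X. card {x\<in>X. lt x v} = m}" for m
  have "antichain lt (A m)" for m
    unfolding antichain_def
  proof (intro ballI impI)
    fix v v' assume h: "v \<in> A m" "v' \<in> A m" "v \<noteq> v'"
    have vT: "v \<in> T" "v' \<in> T" using h XT unfolding A_def by auto
    have no: False if l: "lt a b" "a \<in> A m" "b \<in> A m" for a b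
    proof -
      have aT: "a \<in> T" "b \<in> T" "a \<in> X" using that XT unfolding A_def by auto
      have "{x\<in>X. lt x a} \<subset> {x\<in>X. lt x b}"
      proof
        show "{x\<in>X. lt x a} \<subseteq> {x\<in>X. lt x b}" using trT aT l XT by blast
        have "a \<in> {x\<in>X. lt x b}" "a \<notin> {x\<in>X. lt x a}" using aT l irr by auto
        then show "{x\<in>X. lt x a} \<noteq> {x\<in>X. lt x b}" by blast
      qed
      then have "card {x\<in>X. lt x a} < card {x\<in>X. lt x b}" using psubset_card_mono fx aT by blast
      then show False using that unfolding A_def by simp
    qed
    show "\<not> lt v v' \<and> \<not> lt v' v" using no h by blast
  qed
  moreover have "X = \<Union>(range A)" unfolding A_def by blast
  moreover have "countable (range A)" by simp
  ultimately have "countable (range A) \<and> (\<forall>a\<in>range A. antichain lt a) \<and> X = \<Union>(range A)" by blast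
  then show ?thesis unfolding special_def X_def by (rule exI)
qed

lemma special_union:
  assumes "\<And>n::nat. special lt (X n)"
  shows "special lt (\<Union>n. X n)"
proof -
  have "\<forall>n. \<exists>F. countable F \<and> (\<forall>A\<in>F. antichain lt A) \<and> X n = \<Union>F"
    using assms unfolding special_def by blast
  then obtain F where F: "\<forall>n. countable (F n) \<and> (\<forall>A\<in>F n. antichain lt A) \<and> X n = \<Union>(F n)"
    by metis
  have "countable (\<Union>n. F n)" using F by blast
  moreover have "\<forall>A\<in>(\<Union>n. F n). antichain lt A" using F by blast
  moreover have "(\<Union>n. X n) = \<Union>(\<Union>n. F n)"
  proof -
    have "\<And>n. X n = \<Union>(F n)" using F by blast
    then show ?thesis by auto
  qed
  ultimately show ?thesis unfolding special_def by blast
qed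

definition un where "un n \<alpha> = from_nat_into (level w T lt \<alpha>) n" for n

lemma un_level: "\<forall>\<alpha>\<in>Field w. un n \<alpha> \<in> level w T lt \<alpha>"
  unfolding un_def by (intro ballI from_nat_into level_ne)

lemma restr_un:
  assumes "C \<subseteq> Field w"
  shows "restr w T lt C = (\<Union>n. un n ` C)"
proof
  show "restr w T lt C \<subseteq> (\<Union>n. un n ` C)"
  proof
    fix v assume "v \<in> restr w T lt C"
    then obtain \<alpha> where a: "\<alpha> \<in> C" "v \<in> level w T lt \<alpha>" unfolding restr_def by blast
    have aF: "\<alpha> \<in> Field w" using assms a(1) by blast
    have "range (from_nat_into (level w T lt \<alpha>)) = level w T lt \<alpha>"
      by (rule range_from_nat_into[OF level_ne[OF aF] level_ctbl[OF aF]])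
    then obtain n where "v = un n \<alpha>" using a(2) unfolding un_def by blast
    then show "v \<in> (\<Union>n. un n ` C)" using a(1) by blast
  qed
next
  show "(\<Union>n. un n ` C) \<subseteq> restr w T lt C" using un_level assms unfolding restr_def by blast
qed

lemma main:
  assumes st: "star_s TYPE('i)"
  shows "NS_special w T lt"
proof -
  obtain \<A> where A: "max_antichain_stat w \<A>"
    and dich: "\<forall>\<H>. sigma_directed w \<H> \<longrightarrow>
             (\<forall>S\<in>\<A>. \<exists>C. C \<subseteq> S \<and> uncountable C \<and> rel_closed w S C \<and> locally_in (down \<H>) C)
             \<or> (\<exists>B. stationary w B \<and> orthogonal B \<H>)"
    using mp[OF st[unfolded star_s_def, THEN spec[of _ w]] conjI[OF wo ucof]] by (elim exE conjE) iprover
  have one: "\<forall>S\<in>\<A>. \<exists>C. C \<subseteq> S \<and> uncountable C \<and> rel_closed w S C \<and> locally_in (down (Hs (un n))) C" for n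
  proof -
    have no2: "\<not> (\<exists>B. stationary w B \<and> orthogonal B (Hs (un n)))"
    proof
      assume "\<exists>B. stationary w B \<and> orthogonal B (Hs (un n))"
      then obtain B where B: "stationary w B" "orthogonal B (Hs (un n))" by blast
      have BF: "B \<subseteq> Field w" "uncountable B" using B(1) stat_uncountable by (auto simp: stationary_def)
      obtain x where x: "x \<subseteq> B" "infinite x" "countable x" "\<forall>t\<in>T. finite {\<alpha>\<in>x. lt (un n \<alpha>) t}"
        using antichain_in[OF un_level BF] by blast
      have "x \<in> Hs (un n)" using x BF unfolding Hs_def by blast
      then have "finite (B \<inter> x)" using B(2) unfolding orthogonal_def by blast
      moreover have "B \<inter> x = x" using x by blast
      ultimately show False using x by simp
    qed
    show ?thesis using dich sigma_dir[OF un_level] no2 by blast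
  qed
  have "\<forall>S\<in>\<A>. \<exists>C. C \<subseteq> S \<and> uncountable C \<and> rel_closed w S C \<and> special lt (restr w T lt C)"
  proof
    fix S assume S: "S \<in> \<A>"
    have Sst: "stationary w S" using A S unfolding max_antichain_stat_def by blast
    have SF: "S \<subseteq> Field w" using Sst by (simp add: stationary_def)
    have "\<forall>n. \<exists>C. C \<subseteq> S \<and> uncountable C \<and> rel_closed w S C \<and> locally_in (down (Hs (un n))) C"
      using one S by blast
    then obtain Cn where Cn: "\<forall>n. Cn n \<subseteq> S \<and> uncountable (Cn n) \<and> rel_closed w S (Cn n) \<and> locally_in (down (Hs (un n))) (Cn n)"
      by metis
    define C where "C = (\<Inter>n. Cn n)"
    have CS: "C \<subseteq> S" unfolding C_def using Cn by blast
    have CF: "C \<subseteq> Field w" using CS SF by blast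
    have Cu: "uncountable C" unfolding C_def
      using inter_uncountable[OF Sst, of Cn] Cn by blast
    have Cc: "rel_closed w S C" unfolding rel_closed_def
    proof (intro conjI allI impI)
      show "C \<subseteq> S" by (rule CS)
    next
      fix X a assume h: "X \<subseteq> C \<and> X \<noteq> {} \<and> a \<in> S \<and> least_upper_bound w X a"
      have "a \<in> Cn n" for n
      proof -
        have rc: "rel_closed w S (Cn n)" using Cn by blast
        have "X \<subseteq> Cn n" using h unfolding C_def by blast
        then show ?thesis using rc h unfolding rel_closed_def by blast
      qed
      then show "a \<in> C" unfolding C_def by blast
    qed
    have "special lt (un n ` C)" for n
    proof (rule special_piece[OF un_level CF])
      have "locally_in (down (Hs (un n))) C" unfolding locally_in_def
      proof (intro allI impI)
        fix Y assume Y: "Y \<subseteq> C \<and> countable Y"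
        have "C \<subseteq> Cn n" unfolding C_def by blast
        moreover have "locally_in (down (Hs (un n))) (Cn n)" using Cn by blast
        ultimately show "Y \<in> down (Hs (un n))" using Y unfolding locally_in_def by blast
      qed
      then show "\<forall>t\<in>T. finite {\<alpha>\<in>C. lt (un n \<alpha>) t}" using local_finite by blast
    qed
    then have "special lt (restr w T lt C)" using special_union restr_un[OF CF] by simp
    then show "\<exists>C. C \<subseteq> S \<and> uncountable C \<and> rel_closed w S C \<and> special lt (restr w T lt C)"
      using CS Cu Cc by blast
  qed
  then show ?thesis using A unfolding NS_special_def by blast
qed

end

theorem theorem5p2:
  fixes w :: "'i rel" and T :: "'a set" and lt :: "'a \<Rightarrow> 'a \<Rightarrow> bool"
  assumes "star_s TYPE('i)" and "star_s TYPE('a)"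
    and "is_omega1 w"
    and "aronszajn w T lt"
  shows "NS_special w T lt"
proof -
  interpret atree w T lt
    by (intro atree.intro om1.intro atree_axioms.intro assms(3) assms(4))
  show ?thesis using main assms(1) by blast
qed


end
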